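(* Let $K\ge2$, let $a\in\Delta^{K-1}$ with $a(i)>0$ for all $i\in[K]$, let $T_0\in\mathbb N$, and let $\tau_{T_0}\in\mathbb Z_{\ge0}^K$ with $\sum_i\tau_{T_0}(i)=T_0$. For $t\ge T_0$ define recursively $\tau_{t+1}=\tau_t+e_{A_{t+1}}$, where $A_{t+1}\in\arg\max_{i\in[K]}\{t\,a(i)-\tau_t(i)\}$ (ties broken arbitrarily) and $e_j$ is the $j$-th standard basis vector. Then there exists a finite $T'\ge T_0$ such that for all $t\ge T'$ and all $i\in[K]$: $\tau_t(i)/t\le a(i)+1/t$ (the set of over-sampled arms $\{i:\tau_t(i)/t>a(i)+1/t\}$ is empty), and $$\Big|\frac{\tau_t(i)}{t}-a(i)\Big|<\frac{K}{t}.$$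
   Context: $\Delta^{K-1}=\{a\in[0,1]^K:\sum_i a(i)=1\}$. $\tau_t(i)$ counts how many of the first $t$ selections were arm $i$, so $\sum_i\tau_t(i)=t$. *)

theory Defs
  imports Complex_Main
begin

end

theory Submission
  imports Defs
begin

theorem mainTheorem12:
  fixes K :: nat and a :: "nat \<Rightarrow> real" and T0 :: nat
    and tau :: "nat \<Rightarrow> nat \<Rightarrow> nat" and A :: "nat \<Rightarrow> nat"
  assumes K_ge: "K \<ge> 2"
    and a_pos: "\<And>i. i < K \<Longrightarrow> a i > 0"
    and a_sum: "(\<Sum>i<K. a i) = 1"
    and tau_init: "(\<Sum>i<K. tau T0 i) = T0"
    and A_arm: "\<And>t. t \<ge> T0 \<Longrightarrow> A (Suc t) < K"
    and A_argmax: "\<And>t i. t \<ge> T0 \<Longrightarrow> i < K \<Longrightarrow>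
        real t * a i - real (tau t i) \<le> real t * a (A (Suc t)) - real (tau t (A (Suc t)))"
    and tau_step: "\<And>t i. t \<ge> T0 \<Longrightarrow> i < K \<Longrightarrow>
        tau (Suc t) i = tau t i + (if i = A (Suc t) then 1 else 0)"
  shows "\<exists>T'\<ge>T0. \<forall>t\<ge>T'. \<forall>i<K.
           real (tau t i) / real t \<le> a i + 1 / real t \<and>
           \<bar>real (tau t i) / real t - a i\<bar> < real K / real t"
proof -
  define d where "d t i = real t * a i - real (tau t i)" for t i
  have sumtau: "(\<Sum>i<K. tau t i) = t" if "t \<ge> T0" for t
    using that
  proof (induction t rule: dec_induct)
    case base then show ?case by (rule tau_init)
  next
    case (step t)
    have "(\<Sum>i<K. tau (Suc t) i) = (\<Sum>i<K. tau t i + (if i = A (Suc t) then 1 else 0))"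
      using tau_step step.hyps(1) by (intro sum.cong) auto
    also have "\<dots> = t + (\<Sum>i<K. (if i = A (Suc t) then 1 else 0))"
      by (simp add: sum.distrib step.IH)
    also have "\<dots> = Suc t" using A_arm[of t] step.hyps(1) by simp
    finally show ?case .
  qed
  have sumd: "(\<Sum>i<K. d t i) = 0" if "t \<ge> T0" for t
  proof -
    have "(\<Sum>i<K. d t i) = real t * (\<Sum>i<K. a i) - real (\<Sum>i<K. tau t i)"
      by (simp add: d_def sum_subtractf sum_distrib_left)
    then show ?thesis using a_sum sumtau[OF that] by simp
  qed
  have maxpos: "d t (A (Suc t)) \<ge> 0" if "t \<ge> T0" for t
  proof -
    have "(\<Sum>i<K. d t i) \<le> (\<Sum>i<K. d t (A (Suc t)))"
      using A_argmax[OF that] by (intro sum_mono) (auto simp: d_def)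
    then have "0 \<le> real K * d t (A (Suc t))" using sumd[OF that] by simp
    moreover have "real K > 0" using K_ge by simp
    ultimately show ?thesis by (simp add: zero_le_mult_iff)
  qed
  have dstep: "d (Suc t) i = d t i + a i - (if i = A (Suc t) then 1 else 0)"
    if "t \<ge> T0" "i < K" for t i
    using tau_step[OF that] by (simp add: d_def algebra_simps)
  have inv: "d (Suc t) i > -1" if "t \<ge> T0" "i < K" "d t i > -1" for t i
  proof (cases "i = A (Suc t)")
    case True
    then show ?thesis using dstep[OF that(1,2)] maxpos[OF that(1)] a_pos[OF that(2)] by simp
  next
    case False
    then show ?thesis using dstep[OF that(1,2)] a_pos[OF that(2)] that(3) by simp
  qed
  have inv2: "d s i > -1" if "t \<ge> T0" "i < K" "d t i > -1" "s \<ge> t" for s t i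
    using that(4)
  proof (induction s rule: dec_induct)
    case base then show ?case using that(3) .
  next
    case (step s) then show ?case using inv[of s i] that by simp
  qed
  have ex: "\<exists>t\<ge>T0. d t i > -1" if "i < K" for i
  proof (rule ccontr)
    assume "\<not> ?thesis"
    then have H: "d t i \<le> -1" if "t \<ge> T0" for t using that by force
    have lin: "d (T0 + n) i = d T0 i + real n * a i" for n
    proof (induction n)
      case 0 then show ?case by simp
    next
      case (Suc n)
      have "i \<noteq> A (Suc (T0 + n))"
        using maxpos[of "T0 + n"] H[of "T0 + n"] by auto
      then show ?case using dstep[of "T0 + n" i] \<open>i < K\<close> Suc by (simp add: algebra_simps)
    qed
    obtain n where "real n * a i > -1 - d T0 i"
      using ex_less_of_nat_mult[OF a_pos[OF \<open>i < K\<close>]] by blast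
    then show False using lin[of n] H[of "T0 + n"] by simp
  qed
  have ev: "eventually (\<lambda>t. d t i > -1) sequentially" if "i \<in> {..<K}" for i
  proof -
    from ex that obtain t where "t \<ge> T0" "d t i > -1" by auto
    then show ?thesis unfolding eventually_sequentially using inv2 that by blast
  qed
  have "eventually (\<lambda>t. \<forall>i\<in>{..<K}. d t i > -1) sequentially"
    by (rule eventually_ball_finite) (use ev in auto)
  then obtain N where N: "\<And>t i. t \<ge> N \<Longrightarrow> i < K \<Longrightarrow> d t i > -1"
    unfolding eventually_sequentially by auto
  show ?thesis
  proof (intro exI[of _ "max (max N T0) 1"] conjI allI impI)
    show "T0 \<le> max (max N T0) 1" by simp
    fix t i assume t: "max (max N T0) 1 \<le> t" and i: "i < K"
    have tpos: "real t > 0" using t by simp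
    have lo: "d t i > -1" using N[of t i] t i by simp
    have hi: "d t i \<le> real K - 1"
    proof -
      have split: "(\<Sum>j<K. d t j) = d t i + (\<Sum>j\<in>{..<K} - {i}. d t j)"
        using i by (simp add: sum.remove)
      have "(\<Sum>j\<in>{..<K} - {i}. d t j) \<ge> (\<Sum>j\<in>{..<K} - {i}. -1)"
        using N t by (intro sum_mono) (auto intro: less_imp_le)
      also have "(\<Sum>j\<in>{..<K} - {i}. (-1::real)) = - real (K - 1)"
        using i by simp
      finally show ?thesis using split sumd[of t] t i K_ge by (simp add: of_nat_diff)
    qed
    have e: "real (tau t i) / real t - a i = - d t i / real t"
      using tpos by (simp add: d_def field_simps)
    show "real (tau t i) / real t \<le> a i + 1 / real t"
      using lo tpos by (simp add: d_def field_simps)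
    show "\<bar>real (tau t i) / real t - a i\<bar> < real K / real t"
      unfolding e using lo hi tpos K_ge by (simp add: abs_less_iff divide_less_cancel)
  qed
qed

end
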